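(* For $n\in\{4,5\}$ and every $\varepsilon>0$, there exists a symmetric matrix $A\in\mathbb{R}^{n\times n}$ with $\max_{i,j}|a_{ij}|=1$ and a factorization $A=LTL^T$, where $L=(l_{ij})$ is unit lower triangular with first column $e_1$ and $|l_{ij}|\le 1$, and $T$ is symmetric tridiagonal, such that $\max_{i,j}|t_{ij}|>2^{n-1}-\varepsilon$. Consequently the bound $2^{n-1}$ on the growth factor $\max_{i,j}|t_{ij}|/\max_{i,j}|a_{ij}|$ can be approached arbitrarily closely for $n=4,5$.
   Context: $e_1$ denotes the first column of the $n\times n$ identity matrix. Such factorizations $A=LTL^T$ (with $A$ already permuted) are those produced by Aasen's algorithm. *)

theory Defs
  imports Complex_Main
begin

text \<open>n x n real matrices are represented as functions nat => nat => real,
  with only the entries i, j < n being meaningful (indices 0-based).\<close>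

definition max_abs_entry :: "nat \<Rightarrow> (nat \<Rightarrow> nat \<Rightarrow> real) \<Rightarrow> real" where
  "max_abs_entry n M = Max {\<bar>M i j\<bar> | i j. i < n \<and> j < n}"

definition symmetric_mat :: "nat \<Rightarrow> (nat \<Rightarrow> nat \<Rightarrow> real) \<Rightarrow> bool" where
  "symmetric_mat n M \<longleftrightarrow> (\<forall>i<n. \<forall>j<n. M i j = M j i)"

definition unit_lower_triangular :: "nat \<Rightarrow> (nat \<Rightarrow> nat \<Rightarrow> real) \<Rightarrow> bool" where
  "unit_lower_triangular n L \<longleftrightarrow>
     (\<forall>i<n. L i i = 1) \<and> (\<forall>i<n. \<forall>j<n. i < j \<longrightarrow> L i j = 0)"

definition tridiagonal :: "nat \<Rightarrow> (nat \<Rightarrow> nat \<Rightarrow> real) \<Rightarrow> bool" where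
  "tridiagonal n T \<longleftrightarrow> (\<forall>i<n. \<forall>j<n. i + 1 < j \<or> j + 1 < i \<longrightarrow> T i j = 0)"

definition LTLt :: "nat \<Rightarrow> (nat \<Rightarrow> nat \<Rightarrow> real) \<Rightarrow> (nat \<Rightarrow> nat \<Rightarrow> real) \<Rightarrow> nat \<Rightarrow> nat \<Rightarrow> real" where
  "LTLt n L T i j = (\<Sum>k<n. \<Sum>l<n. L i k * T k l * L j l)"

end

theory Submission
  imports Defs
begin

lemma fin_set: "finite {\<bar>M i j\<bar> | i j. i < (n::nat) \<and> j < n}"
proof -
  have "{\<bar>M i j\<bar> | i j. i < n \<and> j < n} = (\<lambda>(i,j). \<bar>M i j\<bar>) ` ({..<n} \<times> {..<n})"
    by auto
  thus ?thesis by simp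
qed

lemma max_abs_eqI:
  assumes "\<forall>i<n. \<forall>j<n. \<bar>M i j\<bar> \<le> c" and "i0 < n" "j0 < n" "\<bar>M i0 j0\<bar> = c"
  shows "max_abs_entry n M = c"
  unfolding max_abs_entry_def
  by (rule Max_eqI[OF fin_set]) (use assms in force)+

lemma all4: "(\<forall>i<(4::nat). P i) \<longleftrightarrow> P 0 \<and> P 1 \<and> P 2 \<and> P 3"
  by (auto simp: numeral_eq_Suc less_Suc_eq)
lemma all5: "(\<forall>i<(5::nat). P i) \<longleftrightarrow> P 0 \<and> P 1 \<and> P 2 \<and> P 3 \<and> P 4"
  by (auto simp: numeral_eq_Suc less_Suc_eq)
lemma sum4: "(\<Sum>k<(4::nat). f k) = f 0 + f 1 + f 2 + (f 3 :: real)"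
  by (simp add: numeral_eq_Suc lessThan_Suc)
lemma sum5: "(\<Sum>k<(5::nat). f k) = f 0 + f 1 + f 2 + f 3 + (f 4 :: real)"
  by (simp add: numeral_eq_Suc lessThan_Suc)

definition "A4 i j = [[0,0,0,0],[0,-1,-1,1],[0,-1,1,-1],[0,1,-1,1::real]] ! i ! j"
definition "L4 i j = [[1,0,0,0],[0,1,0,0],[0,1,1,0],[0,-1,1,1::real]] ! i ! j"
definition "T4 i j = [[0,0,0,0],[0,-1,0,0],[0,0,2,-4],[0,0,-4,8::real]] ! i ! j"

definition "A5 i j = [[0,0,0,0,0],[0,-1/2,0,-1,-1],[0,0,-1,-1,-1],[0,-1,-1,1,1],[0,-1,-1,1,1::real]] ! i ! j"
definition "L5 i j = [[1,0,0,0,0],[0,1,0,0,0],[0,-1,1,0,0],[0,1,1,1,0],[0,1,1,-1,1::real]] ! i ! j"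
definition "T5 i j = [[0,0,0,0,0],[0,-1/2,-1/2,0,0],[0,-1/2,-3/2,0,0],[0,0,0,4,8],[0,0,0,8,16::real]] ! i ! j"

theorem mainTheorem3:
  fixes n :: nat and \<epsilon> :: real
  assumes "n \<in> {4, 5}" and "\<epsilon> > 0"
  shows "\<exists>A L T :: nat \<Rightarrow> nat \<Rightarrow> real.
           symmetric_mat n A \<and> max_abs_entry n A = 1 \<and>
           unit_lower_triangular n L \<and>
           (\<forall>i<n. L i 0 = (if i = 0 then 1 else 0)) \<and>
           (\<forall>i<n. \<forall>j<n. \<bar>L i j\<bar> \<le> 1) \<and>
           symmetric_mat n T \<and> tridiagonal n T \<and>
           (\<forall>i<n. \<forall>j<n. A i j = LTLt n L T i j) \<and>
           max_abs_entry n T > 2 ^ (n - 1) - \<epsilon>"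
proof (cases "n = 4")
  case True
  have m1: "max_abs_entry 4 A4 = 1"
    by (rule max_abs_eqI[of _ _ _ 1 1]) (simp_all add: all4 A4_def)
  have m2: "max_abs_entry 4 T4 = 8"
    by (rule max_abs_eqI[of _ _ _ 3 3]) (simp_all add: all4 T4_def)
  show ?thesis unfolding True
    apply (rule exI[of _ A4], rule exI[of _ L4], rule exI[of _ T4])
    using assms(2)
    by (simp add: m1 m2 symmetric_mat_def unit_lower_triangular_def tridiagonal_def
        LTLt_def all4 sum4 A4_def L4_def T4_def)
next
  case False
  then have n5: "n = 5" using assms(1) by auto
  have m1: "max_abs_entry 5 A5 = 1"
    by (rule max_abs_eqI[of _ _ _ 2 2]) (simp_all add: all5 A5_def)
  have m2: "max_abs_entry 5 T5 = 16"
    by (rule max_abs_eqI[of _ _ _ 4 4]) (simp_all add: all5 T5_def)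
  show ?thesis unfolding n5
    apply (rule exI[of _ A5], rule exI[of _ L5], rule exI[of _ T5])
    using assms(2)
    by (simp add: m1 m2 symmetric_mat_def unit_lower_triangular_def tridiagonal_def
        LTLt_def all5 sum5 A5_def L5_def T5_def)
qed

end
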